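(* Let $|\psi\rangle,|\phi\rangle\in\mathcal{H}'$ be pure states, with $p_b=|\langle b|\psi\rangle|^2$ and $q_b=|\langle b|\phi\rangle|^2$ for $b\in\{0,1\}$. There exists a deterministic (trace-preserving) Z$_2$-invariant operation $\mathcal{E}$ with $\mathcal{E}(|\psi\rangle\langle\psi|)=|\phi\rangle\langle\phi|$ if and only if $\mathcal{C}(|\psi\rangle)\ge\mathcal{C}(|\phi\rangle)$, where $\mathcal{C}(|\psi\rangle)=2\min\{p_0,p_1\}$ and $\mathcal{C}(|\phi\rangle)=2\min\{q_0,q_1\}$.
   Context: $\mathcal{H}'$ is a two-dimensional Hilbert space with orthonormal basis $|0\rangle,|1\rangle$; the parity operator is $\pi=|0\rangle\langle0|-|1\rangle\langle1|$, and Z$_2$ acts by $\{I,\pi\}$. A Z$_2$-invariant operation is a completely positive, trace-nonincreasing linear map $\mathcal{E}$ on operators on $\mathcal{H}'$ with $\mathcal{E}(\pi X\pi)=\pi\mathcal{E}(X)\pi$ for all $X$; it is deterministic if trace-preserving. *)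

theory Defs
  imports Complex_Main
begin

text \<open>The qubit H' = C^2 with orthonormal basis |0>, |1>; we index the basis by bool,
  False standing for |0> and True for |1>. Operators on H' are 2x2 complex matrices
  X :: bool => bool => complex (X i j = <i|X|j>).\<close>

type_synonym qop = "bool \<Rightarrow> bool \<Rightarrow> complex"
type_synonym qket = "bool \<Rightarrow> complex"

definition qtrace :: "qop \<Rightarrow> complex" where
  "qtrace X = X False False + X True True"

text \<open>Positive semidefinite operator on H' tensor C^k: block matrix indexed by (b,m), m < k.\<close>
definition psd_ext :: "nat \<Rightarrow> (bool \<Rightarrow> nat \<Rightarrow> bool \<Rightarrow> nat \<Rightarrow> complex) \<Rightarrow> bool" where
  "psd_ext k Z \<longleftrightarrow> (\<forall>v :: bool \<Rightarrow> nat \<Rightarrow> complex.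
     (let q = (\<Sum>b\<in>UNIV. \<Sum>m<k. \<Sum>b'\<in>UNIV. \<Sum>m'<k. cnj (v b m) * Z b m b' m' * v b' m')
      in Im q = 0 \<and> Re q \<ge> 0))"

definition psd :: "qop \<Rightarrow> bool" where
  "psd X \<longleftrightarrow> (\<forall>v :: qket.
     (let q = (\<Sum>b\<in>UNIV. \<Sum>b'\<in>UNIV. cnj (v b) * X b b' * v b')
      in Im q = 0 \<and> Re q \<ge> 0))"

definition linear_qmap :: "(qop \<Rightarrow> qop) \<Rightarrow> bool" where
  "linear_qmap E \<longleftrightarrow> (\<forall>a X Y. E (\<lambda>i j. a * X i j + Y i j) = (\<lambda>i j. a * E X i j + E Y i j))"

text \<open>(E tensor id_k) applied to an operator on H' tensor C^k.\<close>
definition ext_map :: "(qop \<Rightarrow> qop) \<Rightarrow> (bool \<Rightarrow> nat \<Rightarrow> bool \<Rightarrow> nat \<Rightarrow> complex)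
    \<Rightarrow> (bool \<Rightarrow> nat \<Rightarrow> bool \<Rightarrow> nat \<Rightarrow> complex)" where
  "ext_map E Z = (\<lambda>b m b' m'. E (\<lambda>c c'. Z c m c' m') b b')"

definition completely_positive :: "(qop \<Rightarrow> qop) \<Rightarrow> bool" where
  "completely_positive E \<longleftrightarrow> (\<forall>k Z. psd_ext k Z \<longrightarrow> psd_ext k (ext_map E Z))"

definition trace_nonincreasing :: "(qop \<Rightarrow> qop) \<Rightarrow> bool" where
  "trace_nonincreasing E \<longleftrightarrow> (\<forall>X. psd X \<longrightarrow> Re (qtrace (E X)) \<le> Re (qtrace X))"

definition trace_preserving :: "(qop \<Rightarrow> qop) \<Rightarrow> bool" where
  "trace_preserving E \<longleftrightarrow> (\<forall>X. qtrace (E X) = qtrace X)"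

text \<open>Parity operator pi = |0><0| - |1><1|; conjugation pi X pi.\<close>
definition parity_sign :: "bool \<Rightarrow> complex" where
  "parity_sign b = (if b then -1 else 1)"

definition parity_conj :: "qop \<Rightarrow> qop" where
  "parity_conj X = (\<lambda>i j. parity_sign i * X i j * parity_sign j)"

definition Z2_invariant_operation :: "(qop \<Rightarrow> qop) \<Rightarrow> bool" where
  "Z2_invariant_operation E \<longleftrightarrow> linear_qmap E \<and> completely_positive E \<and> trace_nonincreasing E
     \<and> (\<forall>X. E (parity_conj X) = parity_conj (E X))"

definition deterministic_Z2_invariant_operation :: "(qop \<Rightarrow> qop) \<Rightarrow> bool" where
  "deterministic_Z2_invariant_operation E \<longleftrightarrow> Z2_invariant_operation E \<and> trace_preserving E"

definition pure_state :: "qket \<Rightarrow> bool" where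
  "pure_state \<psi> \<longleftrightarrow> (cmod (\<psi> False))\<^sup>2 + (cmod (\<psi> True))\<^sup>2 = 1"

definition proj :: "qket \<Rightarrow> qop" where
  "proj \<psi> = (\<lambda>i j. \<psi> i * cnj (\<psi> j))"

definition pop :: "qket \<Rightarrow> bool \<Rightarrow> real" where
  "pop \<psi> b = (cmod (\<psi> b))\<^sup>2"

definition coherence :: "qket \<Rightarrow> real" where
  "coherence \<psi> = 2 * min (pop \<psi> False) (pop \<psi> True)"

end

theory Submission
  imports Defs
begin


definition kr :: "qop \<Rightarrow> qop \<Rightarrow> qop" where
  "kr K X = (\<lambda>i j. \<Sum>c\<in>UNIV. \<Sum>c'\<in>UNIV. K i c * X c c' * cnj (K j c'))"

definition E2 :: "qop \<Rightarrow> qop \<Rightarrow> qop \<Rightarrow> qop" where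
  "E2 K1 K2 = (\<lambda>X i j. kr K1 X i j + kr K2 X i j)"

lemma lin_E2: "linear_qmap (E2 K1 K2)"
  unfolding linear_qmap_def E2_def kr_def
  by (auto simp: UNIV_bool algebra_simps)

definition diagish :: "qop \<Rightarrow> bool" where
  "diagish K \<longleftrightarrow> (K True False = 0 \<and> K False True = 0) \<or> (K False False = 0 \<and> K True True = 0)"

lemma cov_kr: "diagish K \<Longrightarrow> kr K (parity_conj X) = parity_conj (kr K X)"
  unfolding diagish_def kr_def parity_conj_def parity_sign_def
  apply (rule ext)+
  subgoal for i j by (cases i; cases j; auto simp: UNIV_bool algebra_simps)
  done

lemma cov_E2: "diagish K1 \<Longrightarrow> diagish K2 \<Longrightarrow> E2 K1 K2 (parity_conj X) = parity_conj (E2 K1 K2 X)"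
  unfolding E2_def using cov_kr[of K1 X] cov_kr[of K2 X]
  by (auto simp: parity_conj_def algebra_simps fun_eq_iff)

lemma tp_E2:
  assumes "\<And>c c'. (\<Sum>b\<in>UNIV. K1 b c * cnj (K1 b c') + K2 b c * cnj (K2 b c')) = (if c = c' then 1 else 0)"
  shows "trace_preserving (E2 K1 K2)"
  unfolding trace_preserving_def
proof
  fix X
  have "qtrace (E2 K1 K2 X) = (\<Sum>c\<in>UNIV. \<Sum>c'\<in>UNIV. X c c' * (\<Sum>b\<in>UNIV. K1 b c * cnj (K1 b c') + K2 b c * cnj (K2 b c')))"
    by (simp add: qtrace_def E2_def kr_def UNIV_bool algebra_simps)
  also have "\<dots> = qtrace X" by (simp only: assms) (simp add: qtrace_def UNIV_bool)
  finally show "qtrace (E2 K1 K2 X) = qtrace X" .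
qed

lemma kr_proj: "kr K (proj \<psi>) = proj (\<lambda>i. \<Sum>c\<in>UNIV. K i c * \<psi> c)"
  unfolding kr_def proj_def by (auto simp: UNIV_bool algebra_simps fun_eq_iff)

lemma qf_kr: "(\<Sum>b\<in>UNIV. \<Sum>b'\<in>UNIV. cnj (x b) * kr K Y b b' * y b')
  = (\<Sum>c\<in>UNIV. \<Sum>c'\<in>UNIV. cnj (\<Sum>b\<in>UNIV. cnj (K b c) * x b) * Y c c' * (\<Sum>b'\<in>UNIV. cnj (K b' c') * y b'))"
proof -
  have "(\<Sum>b\<in>UNIV. \<Sum>b'\<in>UNIV. cnj (x b) * kr K Y b b' * y b')
     = (\<Sum>b\<in>UNIV. \<Sum>b'\<in>UNIV. \<Sum>c\<in>UNIV. \<Sum>c'\<in>UNIV. cnj (x b) * K b c * Y c c' * cnj (K b' c') * y b')"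
    by (simp add: kr_def sum_distrib_left sum_distrib_right mult.assoc)
  also have "\<dots> = (\<Sum>c\<in>UNIV. \<Sum>c'\<in>UNIV. \<Sum>b\<in>UNIV. \<Sum>b'\<in>UNIV. cnj (x b) * K b c * Y c c' * cnj (K b' c') * y b')"
    by (simp add: UNIV_bool)
  also have "\<dots> = (\<Sum>c\<in>UNIV. \<Sum>c'\<in>UNIV. cnj (\<Sum>b\<in>UNIV. cnj (K b c) * x b) * Y c c' * (\<Sum>b'\<in>UNIV. cnj (K b' c') * y b'))"
    by (simp add: sum_distrib_left sum_distrib_right mult_ac)
  finally show ?thesis .
qed

lemma swap4:
  "(\<Sum>b\<in>A. \<Sum>m\<in>B. \<Sum>b'\<in>A. \<Sum>m'\<in>B. h b m b' m') = (\<Sum>m\<in>B. \<Sum>m'\<in>B. \<Sum>b\<in>A. \<Sum>b'\<in>A. h b m b' m')"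
proof -
  have "(\<Sum>b\<in>A. \<Sum>m\<in>B. \<Sum>b'\<in>A. \<Sum>m'\<in>B. h b m b' m') = (\<Sum>m\<in>B. \<Sum>b\<in>A. \<Sum>b'\<in>A. \<Sum>m'\<in>B. h b m b' m')"
    by (rule sum.swap)
  also have "\<dots> = (\<Sum>m\<in>B. \<Sum>b\<in>A. \<Sum>m'\<in>B. \<Sum>b'\<in>A. h b m b' m')"
    by (intro sum.cong refl) (rule sum.swap)
  also have "\<dots> = (\<Sum>m\<in>B. \<Sum>m'\<in>B. \<Sum>b\<in>A. \<Sum>b'\<in>A. h b m b' m')"
    by (intro sum.cong refl) (rule sum.swap)
  finally show ?thesis .
qed

lemma cp_kr:
  assumes "psd_ext k Z"
  shows "psd_ext k (\<lambda>b m b' m'. kr K (\<lambda>c c'. Z c m c' m') b b')"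
  unfolding psd_ext_def
proof
  fix v :: "bool \<Rightarrow> nat \<Rightarrow> complex"
  define w where "w = (\<lambda>c m. \<Sum>b\<in>UNIV. cnj (K b c) * v b m)"
  have "(\<Sum>b\<in>UNIV. \<Sum>m<k. \<Sum>b'\<in>UNIV. \<Sum>m'<k. cnj (v b m) * kr K (\<lambda>c c'. Z c m c' m') b b' * v b' m')
     = (\<Sum>m<k. \<Sum>m'<k. \<Sum>b\<in>UNIV. \<Sum>b'\<in>UNIV. cnj (v b m) * kr K (\<lambda>c c'. Z c m c' m') b b' * v b' m')"
    by (rule swap4)
  also have "\<dots> = (\<Sum>m<k. \<Sum>m'<k. \<Sum>b\<in>UNIV. \<Sum>b'\<in>UNIV. cnj (w b m) * Z b m b' m' * w b' m')"
    by (rule sum.cong[OF refl], rule sum.cong[OF refl]) (simp only: w_def qf_kr)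
  also have "\<dots> = (\<Sum>b\<in>UNIV. \<Sum>m<k. \<Sum>b'\<in>UNIV. \<Sum>m'<k. cnj (w b m) * Z b m b' m' * w b' m')"
    by (rule swap4[symmetric])
  finally have eq: "(\<Sum>b\<in>UNIV. \<Sum>m<k. \<Sum>b'\<in>UNIV. \<Sum>m'<k. cnj (v b m) * kr K (\<lambda>c c'. Z c m c' m') b b' * v b' m')
     = (\<Sum>b\<in>UNIV. \<Sum>m<k. \<Sum>b'\<in>UNIV. \<Sum>m'<k. cnj (w b m) * Z b m b' m' * w b' m')" .
  show "let q = \<Sum>b\<in>UNIV. \<Sum>m<k. \<Sum>b'\<in>UNIV. \<Sum>m'<k. cnj (v b m) * kr K (\<lambda>c c'. Z c m c' m') b b' * v b' m'
        in Im q = 0 \<and> 0 \<le> Re q"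
    using assms unfolding psd_ext_def eq by blast
qed

lemma psd_ext_add:
  assumes "psd_ext k A" "psd_ext k B"
  shows "psd_ext k (\<lambda>b m b' m'. A b m b' m' + B b m b' m')"
  unfolding psd_ext_def
proof
  fix v :: "bool \<Rightarrow> nat \<Rightarrow> complex"
  have "(\<Sum>b\<in>UNIV. \<Sum>m<k. \<Sum>b'\<in>UNIV. \<Sum>m'<k. cnj (v b m) * (A b m b' m' + B b m b' m') * v b' m')
    = (\<Sum>b\<in>UNIV. \<Sum>m<k. \<Sum>b'\<in>UNIV. \<Sum>m'<k. cnj (v b m) * A b m b' m' * v b' m')
    + (\<Sum>b\<in>UNIV. \<Sum>m<k. \<Sum>b'\<in>UNIV. \<Sum>m'<k. cnj (v b m) * B b m b' m' * v b' m')"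
    by (simp add: sum.distrib[symmetric] algebra_simps)
  note eqAB = this
  show "let q = \<Sum>b\<in>UNIV. \<Sum>m<k. \<Sum>b'\<in>UNIV. \<Sum>m'<k. cnj (v b m) * (A b m b' m' + B b m b' m') * v b' m'
        in Im q = 0 \<and> 0 \<le> Re q"
  proof -
    have "Im (\<Sum>b\<in>UNIV. \<Sum>m<k. \<Sum>b'\<in>UNIV. \<Sum>m'<k. cnj (v b m) * A b m b' m' * v b' m') = 0 \<and> 0 \<le> Re (\<Sum>b\<in>UNIV. \<Sum>m<k. \<Sum>b'\<in>UNIV. \<Sum>m'<k. cnj (v b m) * A b m b' m' * v b' m')"
      using assms(1) unfolding psd_ext_def Let_def by blast
    moreover have "Im (\<Sum>b\<in>UNIV. \<Sum>m<k. \<Sum>b'\<in>UNIV. \<Sum>m'<k. cnj (v b m) * B b m b' m' * v b' m') = 0 \<and> 0 \<le> Re (\<Sum>b\<in>UNIV. \<Sum>m<k. \<Sum>b'\<in>UNIV. \<Sum>m'<k. cnj (v b m) * B b m b' m' * v b' m')"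
      using assms(2) unfolding psd_ext_def Let_def by blast
    ultimately show ?thesis unfolding Let_def eqAB by simp
  qed
qed

lemma cp_E2: "completely_positive (E2 K1 K2)"
  unfolding completely_positive_def
proof (intro allI impI)
  fix k Z assume "psd_ext k Z"
  have "ext_map (E2 K1 K2) Z = (\<lambda>b m b' m'. kr K1 (\<lambda>c c'. Z c m c' m') b b' + kr K2 (\<lambda>c c'. Z c m c' m') b b')"
    by (simp add: ext_map_def E2_def)
  then show "psd_ext k (ext_map (E2 K1 K2) Z)"
    using psd_ext_add[OF cp_kr[OF \<open>psd_ext k Z\<close>] cp_kr[OF \<open>psd_ext k Z\<close>]] by simp
qed

lemma det_E2:
  assumes "diagish K1" "diagish K2"
    "\<And>c c'. (\<Sum>b\<in>UNIV. K1 b c * cnj (K1 b c') + K2 b c * cnj (K2 b c')) = (if c = c' then 1 else 0)"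
  shows "deterministic_Z2_invariant_operation (E2 K1 K2)"
  using tp_E2[OF assms(3)] cov_E2[OF assms(1,2)] lin_E2 cp_E2
  unfolding deterministic_Z2_invariant_operation_def Z2_invariant_operation_def trace_nonincreasing_def trace_preserving_def
  by auto



lemma psd_proj: "psd (proj \<chi>)"
  unfolding psd_def Let_def
proof
  fix v :: qket
  define z where "z = (\<Sum>b\<in>UNIV. cnj (v b) * \<chi> b)"
  have "(\<Sum>b\<in>UNIV. \<Sum>b'\<in>UNIV. cnj (v b) * proj \<chi> b b' * v b') = z * cnj z"
    by (simp add: z_def proj_def UNIV_bool algebra_simps)
  moreover have "Im (z * cnj z) = 0" "Re (z * cnj z) \<ge> 0" by (simp_all add: complex_mult_cnj)
  ultimately show "Im (\<Sum>b\<in>UNIV. \<Sum>b'\<in>UNIV. cnj (v b) * proj \<chi> b b' * v b') = 0 \<and>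
    0 \<le> Re (\<Sum>b\<in>UNIV. \<Sum>b'\<in>UNIV. cnj (v b) * proj \<chi> b b' * v b')" by simp
qed

lemma psd_ext1: "psd X \<Longrightarrow> psd_ext 1 (\<lambda>b m b' m'. X b b')"
  unfolding psd_def psd_ext_def
proof
  fix v :: "bool \<Rightarrow> nat \<Rightarrow> complex"
  assume "\<forall>v. let q = \<Sum>b\<in>UNIV. \<Sum>b'\<in>UNIV. cnj (v b) * X b b' * v b' in Im q = 0 \<and> 0 \<le> Re q"
  then have "let q = \<Sum>b\<in>UNIV. \<Sum>b'\<in>UNIV. cnj (v b 0) * X b b' * v b' 0 in Im q = 0 \<and> 0 \<le> Re q"
    by (rule allE[where x="\<lambda>b. v b 0"])
  then show "let q = \<Sum>b\<in>UNIV. \<Sum>m<1. \<Sum>b'\<in>UNIV. \<Sum>m'<1. cnj (v b m) * X b b' * v b' m'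
     in Im q = 0 \<and> 0 \<le> Re q" by (simp add: Let_def lessThan_Suc)
qed

lemma psd_ext1_rev:
  assumes A: "psd_ext 1 (\<lambda>b m b' m'. X b b')" shows "psd X"
  unfolding psd_def
proof
  fix v :: "qket"
  have "let q = \<Sum>b\<in>UNIV. \<Sum>m<(1::nat). \<Sum>b'\<in>UNIV. \<Sum>m'<(1::nat). cnj (v b) * X b b' * v b' in Im q = 0 \<and> 0 \<le> Re q"
    using A unfolding psd_ext_def by (drule_tac x="\<lambda>b (m::nat). v b" in spec) simp
  then show "let q = \<Sum>b\<in>UNIV. \<Sum>b'\<in>UNIV. cnj (v b) * X b b' * v b' in Im q = 0 \<and> 0 \<le> Re q" by (simp add: Let_def lessThan_Suc)
qed

lemma cp_pos: "completely_positive E \<Longrightarrow> psd X \<Longrightarrow> psd (E X)"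
  unfolding completely_positive_def
  apply (drule spec[of _ 1], drule spec[of _ "\<lambda>b m b' m'. X b b'"])
  apply (rule psd_ext1_rev)
  using psd_ext1[of X] by (simp add: ext_map_def)

lemma nec:
  assumes det: "deterministic_Z2_invariant_operation E" and EP: "E (proj \<psi>) = proj \<phi>"
    and pur: "pure_state \<psi>" "pure_state \<phi>"
  shows "cmod (\<phi> False) * cmod (\<phi> True) \<le> cmod (\<psi> False) * cmod (\<psi> True)"
proof -
  have lin: "\<And>a X Y. E (\<lambda>i j. a * X i j + Y i j) = (\<lambda>i j. a * E X i j + E Y i j)"
    using det unfolding deterministic_Z2_invariant_operation_def Z2_invariant_operation_def linear_qmap_def by blast
  have cov: "\<And>X. E (parity_conj X) = parity_conj (E X)"
    using det unfolding deterministic_Z2_invariant_operation_def Z2_invariant_operation_def by blast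
  have cp: "completely_positive E"
    using det unfolding deterministic_Z2_invariant_operation_def Z2_invariant_operation_def by blast
  have tp: "\<And>X. qtrace (E X) = qtrace X"
    using det unfolding deterministic_Z2_invariant_operation_def trace_preserving_def by blast
  define Z0 :: qop where "Z0 = (\<lambda>i j. 0)"
  have "E (\<lambda>i j. 1 * Z0 i j + Z0 i j) = (\<lambda>i j. 1 * E Z0 i j + E Z0 i j)" by (rule lin)
  then have "E Z0 = (\<lambda>i j. E Z0 i j + E Z0 i j)" by (simp add: Z0_def)
  then have EZ0: "E Z0 = Z0" unfolding Z0_def by (metis add_cancel_left_left)
  define c where "c = \<psi> False * cnj (\<psi> True)"
  define d where "d = \<phi> False * cnj (\<phi> True)"
  have cm: "cmod c = cmod (\<psi> False) * cmod (\<psi> True)" by (simp add: c_def norm_mult)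
  have dm: "cmod d = cmod (\<phi> False) * cmod (\<phi> True)" by (simp add: d_def norm_mult)
  define D :: qop where "D = (\<lambda>i j. (-1) * parity_conj (proj \<psi>) i j + proj \<psi> i j)"
  have ED: "E D = (\<lambda>i j. (-1) * parity_conj (proj \<phi>) i j + proj \<phi> i j)"
    unfolding D_def lin cov EP ..
  have EDFT: "E D False True = 2 * d"
    unfolding ED by (simp add: parity_conj_def parity_sign_def proj_def d_def)
  show ?thesis
  proof (cases "c = 0")
    case True
    have "D = Z0" unfolding D_def Z0_def using True
      by (auto simp: fun_eq_iff parity_conj_def parity_sign_def proj_def c_def)
    then have "d = 0" using EDFT EZ0 by (simp add: Z0_def)
    then show ?thesis using dm cm by (cases "\<phi> False = 0") auto
  next
    case False
    define r where "r = cmod c"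
    have r0: "r > 0" using False by (simp add: r_def)
    define a :: complex where "a = of_real (1/(4*r))"
    define I2 :: qop where "I2 = (\<lambda>i j. if i = j then 1 else 0)"
    define H :: qop where "H = (\<lambda>i j. (1/2) * I2 i j + Z0 i j)"
    define Y :: qop where "Y = (\<lambda>i j. a * D i j + H i j)"
    have EY: "E Y = (\<lambda>i j. a * E D i j + E H i j)" unfolding Y_def by (rule lin)
    have EH: "E H = (\<lambda>i j. (1/2) * E I2 i j + E Z0 i j)" unfolding H_def by (rule lin)
    have pI: "parity_conj I2 = I2" by (auto simp: fun_eq_iff parity_conj_def parity_sign_def I2_def)
    have EIe: "E I2 = parity_conj (E I2)" using cov[of I2] pI by simp
    have EI1: "E I2 False True = 0"
      using fun_cong[OF fun_cong[OF EIe, of False], of True] by (simp add: parity_conj_def parity_sign_def)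
    have EI2: "E I2 True False = 0"
      using fun_cong[OF fun_cong[OF EIe, of True], of False] by (simp add: parity_conj_def parity_sign_def)
    have EDTF: "E D True False = 2 * cnj d"
      unfolding ED by (simp add: parity_conj_def parity_sign_def proj_def d_def)
    have EYFT: "E Y False True = 2 * a * d"
      unfolding EY EH EZ0 by (simp add: EDFT EI1 Z0_def)
    have EYTF: "E Y True False = 2 * a * cnj d"
      unfolding EY EH EZ0 by (simp add: EDTF EI2 Z0_def)
    define \<chi> :: qket where "\<chi> = (\<lambda>b. if b then cnj c / of_real (r * sqrt 2) else of_real (1/sqrt 2))"
    have cc: "c * cnj c = of_real (r^2)" unfolding r_def by (simp only: complex_norm_square)
    have s2: "of_real (sqrt 2) * of_real (sqrt 2) = (2::complex)"
    proof -
      have "sqrt 2 * sqrt 2 = (2::real)" by simp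
      then show ?thesis by (metis of_real_mult of_real_numeral)
    qed
    have Y1: "Y False False = proj \<chi> False False"
      using s2 by (simp add: Y_def D_def H_def I2_def Z0_def proj_def \<chi>_def parity_conj_def parity_sign_def field_simps)
    have Y2: "Y True True = proj \<chi> True True"
      using s2 r0 by (simp add: Y_def D_def H_def I2_def Z0_def proj_def \<chi>_def parity_conj_def parity_sign_def field_simps cc power2_eq_square)
    have Y3: "Y False True = proj \<chi> False True"
      using s2 r0 by (simp add: Y_def D_def H_def I2_def Z0_def proj_def \<chi>_def parity_conj_def parity_sign_def field_simps a_def c_def)
    have Y4: "Y True False = proj \<chi> True False"
      using s2 r0 by (simp add: Y_def D_def H_def I2_def Z0_def proj_def \<chi>_def parity_conj_def parity_sign_def field_simps a_def c_def)
    have Ychi: "Y = proj \<chi>"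
      apply (intro ext)
      subgoal for i j by (cases i; cases j) (simp_all add: Y1 Y2 Y3 Y4)
      done
    have trY: "qtrace (E Y) = 1"
      unfolding tp Ychi using s2 r0 by (simp add: qtrace_def proj_def \<chi>_def field_simps cc power2_eq_square)
    have tT: "E Y True True = 1 - E Y False False" using trY by (simp add: qtrace_def algebra_simps)
    have psdY: "psd (E Y)" using cp_pos[OF cp psd_proj] Ychi by simp
    define v :: qket where "v = (\<lambda>b. if b then - cnj d else of_real (cmod d))"
    have dd: "d * cnj d = of_real ((cmod d)^2)" by (simp only: complex_norm_square)
    have "(\<Sum>b\<in>UNIV. \<Sum>b'\<in>UNIV. cnj (v b) * E Y b b' * v b')
       = of_real (cmod d)^2 * E Y False False + (d * cnj d) * E Y True True - 4 * a * of_real (cmod d) * (d * cnj d)"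
      by (simp add: UNIV_bool v_def EYFT EYTF algebra_simps power2_eq_square)
    also have "\<dots> = of_real ((cmod d)^2 * (1 - cmod d / r))"
      using r0 unfolding dd a_def tT by (simp add: field_simps power2_eq_square)
    finally have qv: "(\<Sum>b\<in>UNIV. \<Sum>b'\<in>UNIV. cnj (v b) * E Y b b' * v b') = of_real ((cmod d)^2 * (1 - cmod d / r))" .
    have "0 \<le> (cmod d)^2 * (1 - cmod d / r)"
    proof -
      have "let q = (\<Sum>b\<in>UNIV. \<Sum>b'\<in>UNIV. cnj (v b) * E Y b b' * v b') in Im q = 0 \<and> 0 \<le> Re q"
        using psdY unfolding psd_def by blast
      then show ?thesis unfolding qv Let_def by simp
    qed
    then have "cmod d = 0 \<or> cmod d \<le> r"
    proof (cases "cmod d = 0")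
      case False
      then have "(cmod d)^2 > 0" by simp
      with \<open>0 \<le> (cmod d)^2 * (1 - cmod d / r)\<close> have "cmod d / r \<le> 1"
        by (simp add: zero_le_mult_iff)
      then show ?thesis using r0 by (simp add: divide_le_eq_1_pos)
    qed simp
    then show ?thesis using dm cm r_def by (metis mult_nonneg_nonneg norm_ge_zero)
  qed
qed



lemma minprod:
  fixes p0 p1 q0 q1 :: real
  assumes "p0 + p1 = 1" "q0 + q1 = 1" "0 \<le> p0" "0 \<le> p1" "0 \<le> q0" "0 \<le> q1" "q0 * q1 \<le> p0 * p1"
  shows "min q0 q1 \<le> min p0 p1"
proof (rule ccontr)
  define mp where "mp = min p0 p1"
  define mq where "mq = min q0 q1"
  have h1: "p1 = 1 - p0" using assms(1) by simp
  have ep: "mp * (1 - mp) = p0 * p1" unfolding mp_def h1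
    by (cases "p0 \<le> 1 - p0") (auto simp: min_def algebra_simps)
  have h2: "q1 = 1 - q0" using assms(2) by simp
  have eq: "mq * (1 - mq) = q0 * q1" unfolding mq_def h2
    by (cases "q0 \<le> 1 - q0") (auto simp: min_def algebra_simps)
  have "mp \<le> 1/2" "mq \<le> 1/2" using assms(1,2) unfolding mp_def mq_def by (auto simp: min_def)
  assume "\<not> min q0 q1 \<le> min p0 p1"
  then have "mq > mp" unfolding mp_def mq_def by linarith
  then have "(mq - mp) * (1 - mq - mp) > 0" using \<open>mp \<le> 1/2\<close> \<open>mq \<le> 1/2\<close> by (intro mult_pos_pos) auto
  then have "mq * (1 - mq) - mp * (1 - mp) > 0" by (simp add: algebra_simps)
  then show False using ep eq assms(7) by linarith
qed

lemma minprod_rev: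
  fixes p0 p1 q0 q1 :: real
  assumes "p0 + p1 = 1" "q0 + q1 = 1" "0 \<le> p0" "0 \<le> p1" "0 \<le> q0" "0 \<le> q1" "min q0 q1 \<le> min p0 p1"
  shows "q0 \<le> q1 \<longrightarrow> (q0 \<le> p0 \<and> p0 \<le> q1)" "q1 \<le> q0 \<longrightarrow> (q1 \<le> p0 \<and> p0 \<le> q0)"
  using assms by (auto simp: min_def split: if_splits)



lemma cnj_self: "z * cnj z = of_real ((cmod z)^2)"
  by (simp only: complex_norm_square)

lemma pure_sum: "pure_state \<phi> \<Longrightarrow> \<phi> False * cnj (\<phi> False) + \<phi> True * cnj (\<phi> True) = 1"
  unfolding pure_state_def cnj_self by (metis of_real_1 of_real_add)

lemma suff_degen:
  assumes pur: "pure_state \<psi>" "pure_state \<phi>" and deg: "\<phi> False = 0 \<or> \<phi> True = 0"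
  shows "\<exists>E. deterministic_Z2_invariant_operation E \<and> E (proj \<psi>) = proj \<phi>"
proof -
  define K1 :: qop where "K1 = (\<lambda>i c. if c then 0 else \<phi> i)"
  define K2 :: qop where "K2 = (\<lambda>i c. if c then \<phi> i else 0)"
  have d: "diagish K1" "diagish K2" using deg by (auto simp: diagish_def K1_def K2_def)
  have t: "(\<Sum>b\<in>UNIV. K1 b c * cnj (K1 b c') + K2 b c * cnj (K2 b c')) = (if c = c' then 1 else 0)" for c c'
    using pure_sum[OF pur(2)] by (cases c; cases c') (simp_all add: K1_def K2_def UNIV_bool)
  have e: "E2 K1 K2 (proj \<psi>) i j = \<phi> i * cnj (\<phi> j) * (\<psi> False * cnj (\<psi> False) + \<psi> True * cnj (\<psi> True))" for i j
    unfolding E2_def kr_proj by (simp add: proj_def K1_def K2_def UNIV_bool algebra_simps)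
  have "E2 K1 K2 (proj \<psi>) = proj \<phi>"
    unfolding fun_eq_iff e pure_sum[OF pur(1)] by (simp add: proj_def)
  then show ?thesis using det_E2[OF d t] by blast
qed


lemma suff_gen:
  assumes pur: "pure_state \<psi>" "pure_state \<phi>" and nz: "\<phi> False \<noteq> 0" "\<phi> True \<noteq> 0"
    and mn: "min (pop \<phi> False) (pop \<phi> True) \<le> min (pop \<psi> False) (pop \<psi> True)"
  shows "\<exists>E. deterministic_Z2_invariant_operation E \<and> E (proj \<psi>) = proj \<phi>"
proof -
  define p0 where "p0 = pop \<psi> False"
  define p1 where "p1 = pop \<psi> True"
  define q0 where "q0 = pop \<phi> False"
  define q1 where "q1 = pop \<phi> True"
  have ps: "p0 + p1 = 1" "q0 + q1 = 1" using pur unfolding pure_state_def p0_def p1_def q0_def q1_def pop_def by auto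
  have nn: "0 \<le> p0" "0 \<le> p1" using p0_def p1_def pop_def by auto
  have qpos: "0 < q0" "0 < q1" using nz unfolding q0_def q1_def pop_def by auto
  have mn': "min q0 q1 \<le> min p0 p1" using mn unfolding p0_def p1_def q0_def q1_def .
  have ppos: "0 < p0" "0 < p1" using mn' qpos nn by (auto simp: min_def split: if_splits)
  have psi_nz: "\<psi> False \<noteq> 0" "\<psi> True \<noteq> 0" using ppos unfolding p0_def p1_def pop_def by auto
  define L where "L = (if q0 = q1 then 1 else (p0 - q1) / (q0 - q1))"
  define M where "M = 1 - L"
  have r1: "q0 \<le> q1 \<longrightarrow> (q0 \<le> p0 \<and> p0 \<le> q1)" "q1 \<le> q0 \<longrightarrow> (q1 \<le> p0 \<and> p0 \<le> q0)"
    using minprod_rev[OF ps nn less_imp_le[OF qpos(1)] less_imp_le[OF qpos(2)] mn'] by auto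
  have LMc: "0 \<le> L \<and> 0 \<le> M \<and> L * q0 + M * q1 = p0"
  proof (cases "q0 = q1")
    case True
    then show ?thesis using r1 ps by (auto simp: L_def M_def)
  next
    case False
    then have "q0 < q1 \<or> q1 < q0" by auto
    then have "0 \<le> L \<and> 0 \<le> M"
      using r1 ps False by (auto simp: L_def M_def field_simps divide_nonneg_neg divide_nonpos_neg le_divide_eq divide_le_eq)
    moreover have e: "L * (q0 - q1) = p0 - q1" using False by (simp add: L_def)
    moreover have "L*q0 + M*q1 = q1 + L*(q0-q1)" by (simp add: M_def algebra_simps)
    ultimately show ?thesis by linarith
  qed
  have LM: "0 \<le> L" "0 \<le> M" "L * q0 + M * q1 = p0" "L * q1 + M * q0 = p1"
    using LMc ps by (auto simp: M_def algebra_simps)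
  define l where "l = sqrt L"
  define m where "m = sqrt M"
  have l2: "l * l = L" "m * m = M" using LM by (auto simp: l_def m_def)
  have l0: "l \<ge> 0" and m0: "m \<ge> 0" using LM by (auto simp: l_def m_def)
  define K1 :: qop where "K1 = (\<lambda>i c. if i = c then of_real l * \<phi> i / \<psi> i else 0)"
  define K2 :: qop where "K2 = (\<lambda>i c. if i = c then 0 else of_real m * \<phi> i / \<psi> c)"
  have d: "diagish K1" "diagish K2" by (auto simp: diagish_def K1_def K2_def)
  have nsq: "z * cnj z = of_real (cmod z * cmod z)" for z by (simp add: cnj_self power2_eq_square)
  have t1: "K1 False False * cnj (K1 False False) + K2 True False * cnj (K2 True False) = 1"
  proof -
    have "K1 False False * cnj (K1 False False) + K2 True False * cnj (K2 True False)
        = of_real ((l * l * q0 + m * m * q1) / p0)"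
      unfolding nsq using l0 m0 psi_nz by (simp add: K1_def K2_def norm_mult norm_divide q0_def q1_def p0_def pop_def power2_eq_square field_simps)
    then show ?thesis using LM ppos l2 by simp
  qed
  have t2: "K1 True True * cnj (K1 True True) + K2 False True * cnj (K2 False True) = 1"
  proof -
    have "K1 True True * cnj (K1 True True) + K2 False True * cnj (K2 False True)
        = of_real ((l * l * q1 + m * m * q0) / p1)"
      unfolding nsq using l0 m0 psi_nz by (simp add: K1_def K2_def norm_mult norm_divide q0_def q1_def p1_def pop_def power2_eq_square field_simps)
    then show ?thesis using LM ppos l2 by simp
  qed
  have t: "(\<Sum>b\<in>UNIV. K1 b c * cnj (K1 b c') + K2 b c * cnj (K2 b c')) = (if c = c' then 1 else 0)" for c c'
    using t1 t2 by (cases c; cases c') (simp_all add: K1_def K2_def UNIV_bool algebra_simps)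
  have a1: "(\<Sum>c\<in>UNIV. K1 i c * \<psi> c) = of_real l * \<phi> i" for i
    using psi_nz by (cases i) (simp_all add: K1_def UNIV_bool)
  have a2: "(\<Sum>c\<in>UNIV. K2 i c * \<psi> c) = of_real m * \<phi> i" for i
    using psi_nz by (cases i) (simp_all add: K2_def UNIV_bool)
  have lm: "of_real l * of_real l + of_real m * of_real m = (1::complex)"
    using l2 M_def by (metis add_diff_cancel_left' diff_add_cancel of_real_1 of_real_add of_real_mult)
  have e: "E2 K1 K2 (proj \<psi>) i j = \<phi> i * cnj (\<phi> j) * (of_real l * of_real l + of_real m * of_real m)" for i j
    unfolding E2_def kr_proj unfolding a1 a2 by (simp add: proj_def algebra_simps)
  have "E2 K1 K2 (proj \<psi>) = proj \<phi>"
    unfolding fun_eq_iff e lm by (simp add: proj_def)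
  then show ?thesis using det_E2[OF d t] by blast
qed


theorem theorem10:
  fixes \<psi> \<phi> :: qket
  assumes "pure_state \<psi>" and "pure_state \<phi>"
  shows "(\<exists>E. deterministic_Z2_invariant_operation E \<and> E (proj \<psi>) = proj \<phi>)
         \<longleftrightarrow> coherence \<psi> \<ge> coherence \<phi>"
proof
  assume "\<exists>E. deterministic_Z2_invariant_operation E \<and> E (proj \<psi>) = proj \<phi>"
  then obtain E where E: "deterministic_Z2_invariant_operation E" "E (proj \<psi>) = proj \<phi>" by blast
  have pr: "cmod (\<phi> False) * cmod (\<phi> True) \<le> cmod (\<psi> False) * cmod (\<psi> True)"
    by (rule nec[OF E assms])
  have "(cmod (\<phi> False) * cmod (\<phi> True))^2 \<le> (cmod (\<psi> False) * cmod (\<psi> True))^2"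
    by (rule power_mono[OF pr]) simp
  then have "pop \<phi> False * pop \<phi> True \<le> pop \<psi> False * pop \<psi> True"
    by (simp add: pop_def power_mult_distrib)
  moreover have "pop \<psi> False + pop \<psi> True = 1" "pop \<phi> False + pop \<phi> True = 1"
    using assms unfolding pure_state_def pop_def by auto
  ultimately have "min (pop \<phi> False) (pop \<phi> True) \<le> min (pop \<psi> False) (pop \<psi> True)"
    by (intro minprod) (auto simp: pop_def)
  then show "coherence \<psi> \<ge> coherence \<phi>" by (simp add: coherence_def)
next
  assume "coherence \<psi> \<ge> coherence \<phi>"
  then have mn: "min (pop \<phi> False) (pop \<phi> True) \<le> min (pop \<psi> False) (pop \<psi> True)"
    by (simp add: coherence_def)
  show "\<exists>E. deterministic_Z2_invariant_operation E \<and> E (proj \<psi>) = proj \<phi>"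
  proof (cases "\<phi> False = 0 \<or> \<phi> True = 0")
    case True
    then show ?thesis by (rule suff_degen[OF assms])
  next
    case False
    then show ?thesis using suff_gen[OF assms _ _ mn] by blast
  qed
qed

end
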